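(* Let $\mathbb{H}$ be a simple hypergraph of order $n$ with strong chromatic number $\chi'(\mathbb{H})=k'$. Then for all non-negative integers $h>k$, $$\lambda_{h,k}(\mathbb{H})\le k(n-k')+(k'-1)h.$$
   Context: A strong $t$-colouring of a hypergraph $\mathbb{H}=(V,E)$ is a partition $\{C_1,\dots,C_t\}$ of $V$ with $|C_i\cap e|\le 1$ for all $e\in E$ and all $i$; $\chi'(\mathbb{H})$ is the least such $t$. For non-negative integers $h>k$, an $L(h,k)$-colouring of $\mathbb{H}$ is a map $f:V\to\mathbb{Z}_{\ge 0}$ such that $|f(u)-f(v)|\ge h$ whenever $u\ne v$ lie in a common edge, and $|f(u)-f(v)|\ge k$ whenever there are edges $e_1\ni v$, $e_2\ni u$ with $(e_1\cap e_2)\setminus\{u,v\}\ne\emptyset$. The span is $\max f-\min f$; $\lambda_{h,k}(\mathbb{H})$ is the minimum span of an $L(h,k)$-colouring. A hypergraph is simple if no edge contains another and every edge has at least two vertices. *)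

theory Defs
  imports "HOL-Library.Disjoint_Sets"
begin

definition hypergraph :: "'a set \<Rightarrow> 'a set set \<Rightarrow> bool" where
  "hypergraph V E \<longleftrightarrow> (\<forall>e\<in>E. e \<subseteq> V)"

definition simple_hypergraph :: "'a set \<Rightarrow> 'a set set \<Rightarrow> bool" where
  "simple_hypergraph V E \<longleftrightarrow> hypergraph V E
     \<and> (\<forall>e1\<in>E. \<forall>e2\<in>E. e1 \<subseteq> e2 \<longrightarrow> e1 = e2)
     \<and> (\<forall>e\<in>E. 2 \<le> card e)"

definition strong_colouring :: "'a set \<Rightarrow> 'a set set \<Rightarrow> 'a set set \<Rightarrow> nat \<Rightarrow> bool" where
  "strong_colouring V E P t \<longleftrightarrow> partition_on V P \<and> finite P \<and> card P = t
     \<and> (\<forall>C\<in>P. \<forall>e\<in>E. card (C \<inter> e) \<le> 1)"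

definition strong_chromatic_number :: "'a set \<Rightarrow> 'a set set \<Rightarrow> nat" where
  "strong_chromatic_number V E = (LEAST t. \<exists>P. strong_colouring V E P t)"

definition Lhk_colouring :: "nat \<Rightarrow> nat \<Rightarrow> 'a set \<Rightarrow> 'a set set \<Rightarrow> ('a \<Rightarrow> nat) \<Rightarrow> bool" where
  "Lhk_colouring h k V E f \<longleftrightarrow>
     (\<forall>u\<in>V. \<forall>v\<in>V. u \<noteq> v \<longrightarrow>
        ((\<exists>e\<in>E. u \<in> e \<and> v \<in> e) \<longrightarrow> int h \<le> \<bar>int (f u) - int (f v)\<bar>)
      \<and> ((\<exists>e1\<in>E. \<exists>e2\<in>E. v \<in> e1 \<and> u \<in> e2 \<and> (e1 \<inter> e2) - {u, v} \<noteq> {})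
           \<longrightarrow> int k \<le> \<bar>int (f u) - int (f v)\<bar>))"

definition span :: "'a set \<Rightarrow> ('a \<Rightarrow> nat) \<Rightarrow> nat" where
  "span V f = Max (f ` V) - Min (f ` V)"

definition lambda_hk :: "nat \<Rightarrow> nat \<Rightarrow> 'a set \<Rightarrow> 'a set set \<Rightarrow> nat" where
  "lambda_hk h k V E = (LEAST s. \<exists>f. Lhk_colouring h k V E f \<and> span V f = s)"

end

theory Submission
  imports Defs
begin

lemma one_class:
  assumes "finite C"
  shows "\<exists>g::'a\<Rightarrow>nat. (\<forall>v\<in>C. g v + k \<le> k * card C) \<and>
     (\<forall>u\<in>C. \<forall>v\<in>C. u \<noteq> v \<longrightarrow> int k \<le> \<bar>int (g u) - int (g v)\<bar>)"
proof -
  obtain b where b: "bij_betw b C {0..<card C}" using ex_bij_betw_finite_nat[OF assms] by blast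
  have lt: "b v < card C" if "v \<in> C" for v using b that bij_betwE by fastforce
  have inj: "b u \<noteq> b v" if "u \<in> C" "v \<in> C" "u \<noteq> v" for u v
    using b that unfolding bij_betw_def inj_on_def by blast
  show ?thesis
  proof (intro exI[of _ "\<lambda>v. k * b v"] conjI ballI impI)
    fix v assume "v \<in> C"
    then have "b v + 1 \<le> card C" using lt by fastforce
    then have "k * (b v + 1) \<le> k * card C" by (rule mult_le_mono2)
    then show "k * b v + k \<le> k * card C" by (simp add: algebra_simps)
  next
    fix u v assume "u \<in> C" "v \<in> C" "u \<noteq> v"
    then have "b u \<noteq> b v" using inj by blast
    then have "1 \<le> \<bar>int (b u) - int (b v)\<bar>" by linarith
    then have "int k * 1 \<le> int k * \<bar>int (b u) - int (b v)\<bar>"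
      by (intro mult_left_mono) auto
    also have "\<dots> = \<bar>int (k * b u) - int (k * b v)\<bar>"
      by (simp add: abs_mult flip: right_diff_distrib)
    finally show "int k \<le> \<bar>int (k * b u) - int (k * b v)\<bar>" by simp
  qed
qed

lemma build:
  assumes "finite P" "P \<noteq> {}" "\<forall>C\<in>P. finite C \<and> C \<noteq> {}" "disjoint P" "k \<le> h"
  shows "\<exists>f::'a\<Rightarrow>nat. card P \<le> card (\<Union>P) \<and>
     (\<forall>v\<in>\<Union>P. f v \<le> k * (card (\<Union>P) - card P) + (card P - 1) * h) \<and>
     (\<forall>u\<in>\<Union>P. \<forall>v\<in>\<Union>P. u \<noteq> v \<longrightarrow> int k \<le> \<bar>int (f u) - int (f v)\<bar>) \<and>
     (\<forall>u\<in>\<Union>P. \<forall>v\<in>\<Union>P. (\<forall>C\<in>P. u \<in> C \<longrightarrow> v \<notin> C) \<longrightarrow> int h \<le> \<bar>int (f u) - int (f v)\<bar>)"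
  using assms
proof (induction P rule: finite_ne_induct)
  case (singleton C)
  then have fC: "finite C" "C \<noteq> {}" by auto
  obtain g :: "'a \<Rightarrow> nat" where g: "\<forall>v\<in>C. g v + k \<le> k * card C"
    "\<forall>u\<in>C. \<forall>v\<in>C. u \<noteq> v \<longrightarrow> int k \<le> \<bar>int (g u) - int (g v)\<bar>"
    using one_class[OF fC(1)] by blast
  have "1 \<le> card C" using fC by (simp add: Suc_le_eq card_gt_0_iff)
  moreover have "\<forall>v\<in>C. g v \<le> k * (card C - 1)"
  proof
    fix v assume "v \<in> C"
    then have "g v + k \<le> k * card C" using g(1) by blast
    then show "g v \<le> k * (card C - 1)" unfolding right_diff_distrib' mult_1_right by linarith
  qed
  ultimately show ?case using g(2) by (intro exI[of _ g]) auto
next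
  case (insert C P)
  have dP: "disjoint P" using insert.prems(2) by (simp add: pairwise_insert)
  have CP: "C \<inter> \<Union>P = {}"
  proof (rule ccontr)
    assume "C \<inter> \<Union>P \<noteq> {}"
    then obtain x D where x: "x \<in> C" "D \<in> P" "x \<in> D" by blast
    have "C \<noteq> D" using x(2) insert.hyps(3) by blast
    then have "C \<inter> D = {}" using disjointD[OF insert.prems(2)] x(2) by blast
    then show False using x by blast
  qed
  have pr: "\<forall>D\<in>P. finite D \<and> D \<noteq> {}" using insert.prems(1) by blast
  obtain f :: "'a \<Rightarrow> nat" where f: "card P \<le> card (\<Union>P)"
    "\<forall>v\<in>\<Union>P. f v \<le> k * (card (\<Union>P) - card P) + (card P - 1) * h"
    "\<forall>u\<in>\<Union>P. \<forall>v\<in>\<Union>P. u \<noteq> v \<longrightarrow> int k \<le> \<bar>int (f u) - int (f v)\<bar>"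
    "\<forall>u\<in>\<Union>P. \<forall>v\<in>\<Union>P. (\<forall>C\<in>P. u \<in> C \<longrightarrow> v \<notin> C) \<longrightarrow> int h \<le> \<bar>int (f u) - int (f v)\<bar>"
    using insert.IH[OF pr dP insert.prems(3)] by blast
  have fC: "finite C" "C \<noteq> {}" using insert.prems by auto
  obtain g :: "'a \<Rightarrow> nat" where g: "\<forall>v\<in>C. g v + k \<le> k * card C"
    "\<forall>u\<in>C. \<forall>v\<in>C. u \<noteq> v \<longrightarrow> int k \<le> \<bar>int (g u) - int (g v)\<bar>"
    using one_class[OF fC(1)] by blast
  have c1: "1 \<le> card C" using fC by (simp add: Suc_le_eq card_gt_0_iff)
  have finUP: "finite (\<Union>P)" using insert.prems insert.hyps(1) by auto
  have cardU: "card (\<Union>(insert C P)) = card C + card (\<Union>P)"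
    using CP fC finUP by (simp add: card_Un_disjoint)
  have cardP: "card (insert C P) = card P + 1" using insert.hyps by simp
  have p1: "1 \<le> card P" using insert.hyps by (simp add: Suc_le_eq card_gt_0_iff)
  define Off where "Off = k * (card (\<Union>P) - card P) + (card P - 1) * h"
  define F where "F = (\<lambda>v. if v \<in> C then Off + h + g v else f v)"
  have gle: "g v \<le> k * (card C - 1)" if "v \<in> C" for v
  proof -
    have "g v + k \<le> k * card C" using g(1) that by blast
    then show ?thesis unfolding right_diff_distrib' mult_1_right by linarith
  qed
  have bound_eq: "Off + h + k * (card C - 1) = k * (card C + card (\<Union>P) - (card P + 1)) + (card P + 1 - 1) * h"
  proof -
    have "k * (card C + card (\<Union>P) - (card P + 1)) = k * (card (\<Union>P) - card P) + k * (card C - 1)"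
      using f(1) c1 by (simp add: right_diff_distrib' algebra_simps)
    moreover have "(card P + 1 - 1) * h = (card P - 1) * h + h" using p1
      by (metis Nat.add_diff_assoc2 add_diff_cancel_right' add.commute mult_Suc plus_1_eq_Suc)
    ultimately show ?thesis unfolding Off_def by simp
  qed
  show ?case
  proof (intro exI[of _ F] conjI ballI impI)
    show "card (insert C P) \<le> card (\<Union>(insert C P))" using cardU cardP f(1) c1 by simp
  next
    fix v assume v: "v \<in> \<Union>(insert C P)"
    show "F v \<le> k * (card (\<Union>(insert C P)) - card (insert C P)) + (card (insert C P) - 1) * h"
    proof (cases "v \<in> C")
      case True
      then have "F v \<le> Off + h + k * (card C - 1)" using gle unfolding F_def by simp
      then show ?thesis using bound_eq cardU cardP by simp
    next
      case False
      then have "F v \<le> Off" using v f(2) unfolding F_def Off_def by auto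
      then show ?thesis using bound_eq cardU cardP by simp
    qed
  next
    fix u v assume u: "u \<in> \<Union>(insert C P)" and v: "v \<in> \<Union>(insert C P)" and uv: "u \<noteq> v"
    have fO: "\<And>w. w \<in> \<Union>P \<Longrightarrow> f w \<le> Off" using f(2) unfolding Off_def by auto
    show "int k \<le> \<bar>int (F u) - int (F v)\<bar>"
    proof (cases "u \<in> C")
      case True
      show ?thesis
      proof (cases "v \<in> C")
        case True then show ?thesis using \<open>u \<in> C\<close> g(2) uv unfolding F_def by auto
      next
        case False
        then have "v \<in> \<Union>P" using v by auto
        then have "f v \<le> Off" by (rule fO)
        then show ?thesis using \<open>u \<in> C\<close> False assms(5) \<open>k \<le> h\<close> unfolding F_def by auto
      qed
    next
      case False
      then have uP: "u \<in> \<Union>P" using u by auto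
      show ?thesis
      proof (cases "v \<in> C")
        case True
        have "f u \<le> Off" using uP by (rule fO)
        then show ?thesis using True False \<open>k \<le> h\<close> unfolding F_def by auto
      next
        case vC: False
        then have "v \<in> \<Union>P" using v by auto
        then show ?thesis using f(3) uP uv False vC unfolding F_def by auto
      qed
    qed
  next
    fix u v assume u: "u \<in> \<Union>(insert C P)" and v: "v \<in> \<Union>(insert C P)"
      and sep: "\<forall>D\<in>insert C P. u \<in> D \<longrightarrow> v \<notin> D"
    have fO: "\<And>w. w \<in> \<Union>P \<Longrightarrow> f w \<le> Off" using f(2) unfolding Off_def by auto
    show "int h \<le> \<bar>int (F u) - int (F v)\<bar>"
    proof (cases "u \<in> C")
      case True
      then have "v \<notin> C" using sep by auto
      then have "v \<in> \<Union>P" using v by auto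
      then have "f v \<le> Off" by (rule fO)
      then show ?thesis using True \<open>v \<notin> C\<close> unfolding F_def by auto
    next
      case False
      then have uP: "u \<in> \<Union>P" using u by auto
      show ?thesis
      proof (cases "v \<in> C")
        case True
        have "f u \<le> Off" using uP by (rule fO)
        then show ?thesis using True False unfolding F_def by auto
      next
        case vC: False
        then have "v \<in> \<Union>P" using v by auto
        then show ?thesis using f(4) uP sep False vC unfolding F_def by auto
      qed
    qed
  qed
qed

theorem theorem3p1:
  fixes V :: "'a set" and E :: "'a set set" and n k' h k :: nat
  assumes "finite V" and "V \<noteq> {}"
    and "simple_hypergraph V E"
    and "card V = n"
    and "strong_chromatic_number V E = k'"
    and "k < h"
  shows "lambda_hk h k V E \<le> k * (n - k') + (k' - 1) * h"
proof -
  have hyp: "\<forall>e\<in>E. e \<subseteq> V" using assms(3) unfolding simple_hypergraph_def hypergraph_def by blast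
  let ?S = "(\<lambda>x. {x}) ` V"
  have sing: "strong_colouring V E ?S n"
  proof -
    have "card ?S = n" using assms(4) by (simp add: card_image)
    moreover have "\<forall>C\<in>?S. \<forall>e\<in>E. card (C \<inter> e) \<le> 1"
    proof (intro ballI)
      fix C e assume "C \<in> ?S" "e \<in> E"
      then obtain x where "C = {x}" by auto
      then show "card (C \<inter> e) \<le> 1" by (cases "x \<in> e") auto
    qed
    ultimately show ?thesis unfolding strong_colouring_def
      using partition_on_singletons assms(1) by blast
  qed
  then have ex: "\<exists>t P. strong_colouring V E P t" by blast
  obtain P where P: "strong_colouring V E P k'"
    using LeastI_ex[of "\<lambda>t. \<exists>P. strong_colouring V E P t"] ex assms(5)
    unfolding strong_chromatic_number_def by blast
  have part: "partition_on V P" "finite P" "card P = k'" "\<forall>C\<in>P. \<forall>e\<in>E. card (C \<inter> e) \<le> 1"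
    using P unfolding strong_colouring_def by blast+
  have UP: "\<Union>P = V" using part(1) by (simp add: partition_on_def)
  have Pne: "P \<noteq> {}" using UP assms(2) by auto
  have cls: "\<forall>C\<in>P. finite C \<and> C \<noteq> {}"
  proof
    fix C assume C: "C \<in> P"
    then have "C \<subseteq> V" using UP by blast
    then have "finite C" using assms(1) by (rule finite_subset)
    moreover have "C \<noteq> {}" using C partition_onD3[OF part(1)] by blast
    ultimately show "finite C \<and> C \<noteq> {}" by blast
  qed
  obtain f :: "'a \<Rightarrow> nat" where f:
    "\<forall>v\<in>\<Union>P. f v \<le> k * (card (\<Union>P) - card P) + (card P - 1) * h"
    "\<forall>u\<in>\<Union>P. \<forall>v\<in>\<Union>P. u \<noteq> v \<longrightarrow> int k \<le> \<bar>int (f u) - int (f v)\<bar>"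
    "\<forall>u\<in>\<Union>P. \<forall>v\<in>\<Union>P. (\<forall>C\<in>P. u \<in> C \<longrightarrow> v \<notin> C) \<longrightarrow> int h \<le> \<bar>int (f u) - int (f v)\<bar>"
    using build[OF part(2) Pne cls partition_onD2[OF part(1)] less_imp_le[OF assms(6)]] by blast
  have col: "Lhk_colouring h k V E f"
    unfolding Lhk_colouring_def
  proof (intro ballI impI conjI)
    fix u v assume u: "u \<in> V" and v: "v \<in> V" and uv: "u \<noteq> v"
    show "int k \<le> \<bar>int (f u) - int (f v)\<bar>" if "\<exists>e1\<in>E. \<exists>e2\<in>E. v \<in> e1 \<and> u \<in> e2 \<and> e1 \<inter> e2 - {u, v} \<noteq> {}"
      using f(2) u v uv UP by auto
    show "int h \<le> \<bar>int (f u) - int (f v)\<bar>" if ex: "\<exists>e\<in>E. u \<in> e \<and> v \<in> e"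
    proof -
      obtain e where e: "e \<in> E" "u \<in> e" "v \<in> e" using ex by blast
      have "\<forall>C\<in>P. u \<in> C \<longrightarrow> v \<notin> C"
      proof (intro ballI impI notI)
        fix C assume C: "C \<in> P" "u \<in> C" "v \<in> C"
        have "finite (C \<inter> e)" using cls C(1) by auto
        moreover have "{u, v} \<subseteq> C \<inter> e" using C e by auto
        ultimately have "card {u, v} \<le> card (C \<inter> e)" by (rule card_mono)
        moreover have "card {u, v} = 2" using uv by simp
        moreover have "card (C \<inter> e) \<le> 1" using part(4) C(1) e(1) by blast
        ultimately show False by linarith
      qed
      then show ?thesis using f(3) u v UP by auto
    qed
  qed
  have "span V f \<le> Max (f ` V)" unfolding span_def by simp
  also have "\<dots> \<le> k * (n - k') + (k' - 1) * h"
  proof -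
    have "\<forall>x\<in>f ` V. x \<le> k * (n - k') + (k' - 1) * h"
      using f(1) UP part(3) assms(4) by blast
    moreover have "finite (f ` V)" "f ` V \<noteq> {}" using assms(1,2) by auto
    ultimately show ?thesis using Max_le_iff by blast
  qed
  finally have sp: "span V f \<le> k * (n - k') + (k' - 1) * h" .
  have "lambda_hk h k V E \<le> span V f" unfolding lambda_hk_def
    by (rule Least_le) (use col in blast)
  then show ?thesis using sp by simp
qed

end
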